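(* Let $\delta,\kappa,a,\alpha>0$ and $\varphi\in(-\pi/2,\pi/2)$, and put $d=2\pi\delta$, $\gamma=[-d,d]$, $\Gamma=\kappa\cos\varphi$, $q_0=\dfrac{2\pi\delta\kappa}{\cos\varphi}$. Let $\varepsilon^{(L)}:\gamma\to\mathbb{R}$ be continuous with $1<\varepsilon^{(L)}(z)\le E$ for all $z\in\gamma$, where $E=\max_{z\in\gamma}\varepsilon^{(L)}(z)>1$. Assume $$(E-1)q_0<1,\qquad \alpha<\alpha_0:=\frac{4}{27}\,\frac{1}{a^2}\,\frac{\bigl[1-(E-1)q_0\bigr]^3}{q_0}.$$ Then the cubic polynomial $P_K(p)=\alpha q_0p^3-\bigl(1-(E-1)q_0\bigr)p+a$ has two positive zeros $p_1<p_2$. Let $p\in(p_1,p_2)$ be such that $$t_0:=q_0\bigl(E-1+3\alpha p^2\bigr)<1,$$ and assume moreover $0<\alpha<\min\{\alpha_0,\alpha_1\}$ with $\alpha_1=\frac13\bigl\{q_0\,[1-(E-1)q_0]\bigr\}^{-1}$. Then the operator $T$ maps the closed ball $\bar S_p=\{U\in C(\gamma):\|U\|\le p\}$ into itself and is a contraction there: $\|T(U)-T(V)\|\le t_0\|U-V\|$ for all $U,V\in\bar S_p$.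
   Context: $C(\gamma)$ denotes the Banach space of continuous complex-valued functions on $\gamma$ with norm $\|U\|=\max_{z\in\gamma}|U(z)|$. The operator $T:C(\gamma)\to C(\gamma)$ is $$T(U)(z)=a\,e^{-i\Gamma(z-d)}-\frac{i\kappa^2}{2\Gamma}\int_{-d}^{d}e^{i\Gamma|z-z_0|}\Bigl[1-\varepsilon^{(L)}(z_0)-\alpha|U(z_0)|^2\Bigr]U(z_0)\,dz_0 ,$$ so that fixed points of $T$ are exactly the solutions of the nonlinear integral equation $$U(z)+\frac{i\kappa^2}{2\Gamma}\int_{-d}^{d}e^{i\Gamma|z-z_0|}\Bigl[1-\bigl(\varepsilon^{(L)}(z_0)+\alpha|U(z_0)|^2\bigr)\Bigr]U(z_0)\,dz_0=a\,e^{-i\Gamma(z-d)},\quad z\in\gamma \qquad(\ast)$$ (the integral equation for the field in a Kerr-nonlinear dielectric layer of thickness $4\pi\delta$ illuminated by a plane wave of amplitude $a$ at incidence angle $\varphi$). *)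

theory Defs
  imports "HOL-Analysis.Analysis"
begin

text \<open>Elements of C(gamma), gamma = [-d,d], are represented as functions real => complex,
  continuous on gamma; only their values on gamma matter.\<close>

definition supnorm :: "real \<Rightarrow> (real \<Rightarrow> complex) \<Rightarrow> real" where
  "supnorm d U = Sup ((\<lambda>z. cmod (U z)) ` {-d..d})"

definition closed_ball_C :: "real \<Rightarrow> real \<Rightarrow> (real \<Rightarrow> complex) set" where
  "closed_ball_C d p = {U. continuous_on {-d..d} U \<and> supnorm d U \<le> p}"

definition T_op :: "real \<Rightarrow> real \<Rightarrow> real \<Rightarrow> real \<Rightarrow> (real \<Rightarrow> real) \<Rightarrow> real
     \<Rightarrow> (real \<Rightarrow> complex) \<Rightarrow> real \<Rightarrow> complex" where
  "T_op a \<Gamma> \<kappa> d epsL \<alpha> U z =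
     complex_of_real a * exp (- \<i> * complex_of_real (\<Gamma> * (z - d)))
     - (\<i> * complex_of_real (\<kappa>\<^sup>2 / (2 * \<Gamma>))) *
       integral {-d..d} (\<lambda>z0. exp (\<i> * complex_of_real (\<Gamma> * \<bar>z - z0\<bar>)) *
          complex_of_real (1 - epsL z0 - \<alpha> * (cmod (U z0))\<^sup>2) * U z0)"

end

theory Submission
  imports Defs
begin


lemma int_bound:
  fixes h :: "real \<Rightarrow> complex"
  assumes "continuous_on {-d..d} h" "d \<ge> 0" "\<And>z0. z0\<in>{-d..d} \<Longrightarrow> cmod (h z0) \<le> B"
  shows "cmod (integral {-d..d} (\<lambda>z0. exp (\<i> * complex_of_real (G * \<bar>z - z0\<bar>)) * h z0)) \<le> 2*d*B"
proof -
  have c: "continuous_on {-d..d} (\<lambda>z0. exp (\<i> * complex_of_real (G * \<bar>z - z0\<bar>)) * h z0)"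
    by (intro continuous_intros assms)
  have "cmod (integral {-d..d} (\<lambda>z0. exp (\<i> * complex_of_real (G * \<bar>z - z0\<bar>)) * h z0)) \<le> integral {-d..d} (\<lambda>_. B)"
    apply (rule integral_norm_bound_integral)
    using c integrable_continuous_interval apply blast
     apply (simp add: integrable_const_ivl)
    by (simp add: norm_mult norm_exp_i_times assms(3))
  also have "\<dots> = 2*d*B" using assms(2) by simp
  finally show ?thesis .
qed

lemma int_cont:
  fixes h :: "real \<Rightarrow> complex"
  assumes "continuous_on {-d..d} h"
  shows "continuous_on S (\<lambda>z. integral {-d..d} (\<lambda>z0. exp (\<i> * complex_of_real (G * \<bar>z - z0\<bar>)) * h z0))"
proof -
  have h2: "continuous_on (S \<times> {-d..d}) (\<lambda>x. h (snd x))"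
    by (rule continuous_on_compose2[OF assms]) (auto intro: continuous_intros)
  have "continuous_on (S \<times> cbox (-d) d) (\<lambda>(z, z0). exp (\<i> * complex_of_real (G * \<bar>z - z0\<bar>)) * h z0)"
    unfolding split_beta cbox_interval
    by (intro continuous_intros h2)
  from integral_continuous_on_param[OF this] show ?thesis by (simp add: cbox_interval)
qed

lemma cubic_diff:
  fixes u v :: complex
  assumes "cmod u \<le> p" "cmod v \<le> p"
  shows "cmod (complex_of_real ((cmod u)\<^sup>2) * u - complex_of_real ((cmod v)\<^sup>2) * v) \<le> 3 * p\<^sup>2 * cmod (u - v)"
proof -
  have eq: "complex_of_real ((cmod u)\<^sup>2) * u - complex_of_real ((cmod v)\<^sup>2) * v
     = complex_of_real ((cmod u)\<^sup>2) * (u - v) + complex_of_real ((cmod u)\<^sup>2 - (cmod v)\<^sup>2) * v"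
    by (simp add: algebra_simps)
  have n1: "cmod (complex_of_real ((cmod u)\<^sup>2) * (u - v)) = (cmod u)\<^sup>2 * cmod (u-v)"
    by (simp only: norm_mult norm_of_real) simp
  have n2: "cmod (complex_of_real ((cmod u)\<^sup>2 - (cmod v)\<^sup>2) * v) = \<bar>(cmod u)\<^sup>2 - (cmod v)\<^sup>2\<bar> * cmod v"
    by (simp only: norm_mult norm_of_real)
  have "\<bar>(cmod u)\<^sup>2 - (cmod v)\<^sup>2\<bar> = \<bar>cmod u - cmod v\<bar> * (cmod u + cmod v)"
  proof -
    have "(cmod u)\<^sup>2 - (cmod v)\<^sup>2 = (cmod u - cmod v) * (cmod u + cmod v)"
      by (simp add: power2_eq_square algebra_simps)
    then show ?thesis by (simp add: abs_mult)
  qed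
  also have "\<dots> \<le> cmod (u - v) * (cmod u + cmod v)"
    by (intro mult_right_mono norm_triangle_ineq3) simp
  finally have n3: "\<bar>(cmod u)\<^sup>2 - (cmod v)\<^sup>2\<bar> * cmod v \<le> cmod (u - v) * (cmod u + cmod v) * cmod v"
    by (intro mult_right_mono) auto
  have "cmod (complex_of_real ((cmod u)\<^sup>2) * u - complex_of_real ((cmod v)\<^sup>2) * v)
      \<le> (cmod u)\<^sup>2 * cmod (u-v) + cmod (u - v) * (cmod u + cmod v) * cmod v"
    using norm_triangle_ineq[of "complex_of_real ((cmod u)\<^sup>2) * (u - v)" "complex_of_real ((cmod u)\<^sup>2 - (cmod v)\<^sup>2) * v"]
    unfolding eq n1 n2 using n3 by linarith
  also have "\<dots> = cmod (u-v) * ((cmod u)\<^sup>2 + cmod u * cmod v + (cmod v)\<^sup>2)"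
    by (simp add: algebra_simps power2_eq_square)
  also have "\<dots> \<le> cmod (u-v) * (3 * p\<^sup>2)"
  proof (rule mult_left_mono)
    have "(cmod u)\<^sup>2 \<le> p\<^sup>2" "(cmod v)\<^sup>2 \<le> p\<^sup>2" "cmod u * cmod v \<le> p * p"
      using assms by (auto intro: power_mono mult_mono norm_ge_zero order_trans[OF norm_ge_zero])
    then show "(cmod u)\<^sup>2 + cmod u * cmod v + (cmod v)\<^sup>2 \<le> 3 * p\<^sup>2"
      by (simp add: power2_eq_square)
  qed simp
  finally show ?thesis by (simp add: mult.commute)
qed

lemma f_lip:
  fixes u v :: complex
  assumes "cmod u \<le> p" "cmod v \<le> p" "1 \<le> e" "e \<le> E" "\<alpha> \<ge> 0"
  shows "cmod (complex_of_real (1 - e - \<alpha> * (cmod u)\<^sup>2) * u - complex_of_real (1 - e - \<alpha> * (cmod v)\<^sup>2) * v)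
     \<le> (E - 1 + 3 * \<alpha> * p\<^sup>2) * cmod (u - v)"
proof -
  have eq: "complex_of_real (1 - e - \<alpha> * (cmod u)\<^sup>2) * u - complex_of_real (1 - e - \<alpha> * (cmod v)\<^sup>2) * v
    = complex_of_real (1 - e) * (u - v) - complex_of_real \<alpha> * (complex_of_real ((cmod u)\<^sup>2) * u - complex_of_real ((cmod v)\<^sup>2) * v)"
    by (simp add: algebra_simps)
  have a: "cmod (complex_of_real (1 - e) * (u - v)) \<le> (E - 1) * cmod (u - v)"
    using assms by (simp only: norm_mult norm_of_real) (simp add: mult_right_mono)
  have b: "cmod (complex_of_real \<alpha> * (complex_of_real ((cmod u)\<^sup>2) * u - complex_of_real ((cmod v)\<^sup>2) * v)) \<le> \<alpha> * (3 * p\<^sup>2 * cmod (u - v))"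
    using assms cubic_diff[OF assms(1,2)] by (simp only: norm_mult norm_of_real) (simp add: mult_left_mono)
  show ?thesis unfolding eq
    using norm_triangle_ineq4[of "complex_of_real (1 - e) * (u - v)" "complex_of_real \<alpha> * (complex_of_real ((cmod u)\<^sup>2) * u - complex_of_real ((cmod v)\<^sup>2) * v)"] a b
    by (simp only: distrib_right)
qed

lemma f_bound:
  fixes u :: complex
  assumes "cmod u \<le> p" "1 \<le> e" "e \<le> E" "\<alpha> \<ge> 0"
  shows "cmod (complex_of_real (1 - e - \<alpha> * (cmod u)\<^sup>2) * u) \<le> (E - 1 + \<alpha> * p\<^sup>2) * p"
proof -
  have "cmod (complex_of_real (1 - e - \<alpha> * (cmod u)\<^sup>2) * u) = (e - 1 + \<alpha> * (cmod u)\<^sup>2) * cmod u"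
  proof -
    have "\<bar>1 - e - \<alpha> * (cmod u)\<^sup>2\<bar> = e - 1 + \<alpha> * (cmod u)\<^sup>2"
      using assms \<open>\<alpha> \<ge> 0\<close> by (smt (verit) mult_nonneg_nonneg zero_le_power2)
    then show ?thesis by (simp only: norm_mult norm_of_real)
  qed
  also have "\<dots> \<le> (E - 1 + \<alpha> * p\<^sup>2) * p"
    using assms by (intro mult_mono add_mono mult_left_mono power_mono) auto
  finally show ?thesis .
qed


lemma supnorm_le:
  assumes "d \<ge> 0" "\<And>z. z\<in>{-d..d} \<Longrightarrow> cmod (U z) \<le> B"
  shows "supnorm d U \<le> B"
  unfolding supnorm_def using assms by (intro cSup_least) auto

lemma supnorm_ge:
  assumes "continuous_on {-d..d} U" "z \<in> {-d..d}"
  shows "cmod (U z) \<le> supnorm d U"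
proof -
  have "compact ((\<lambda>z. cmod (U z)) ` {-d..d})"
    by (intro compact_continuous_image continuous_intros assms) simp
  then have "bdd_above ((\<lambda>z. cmod (U z)) ` {-d..d})"
    by (intro bounded_imp_bdd_above compact_imp_bounded)
  then show ?thesis unfolding supnorm_def using assms(2) by (intro cSup_upper) auto
qed

lemma T_eq:
  "T_op a \<Gamma> \<kappa> d epsL \<alpha> U z =
     complex_of_real a * exp (- \<i> * complex_of_real (\<Gamma> * (z - d)))
     - (\<i> * complex_of_real (\<kappa>\<^sup>2 / (2 * \<Gamma>))) *
       integral {-d..d} (\<lambda>z0. exp (\<i> * complex_of_real (\<Gamma> * \<bar>z - z0\<bar>)) *
          (complex_of_real (1 - epsL z0 - \<alpha> * (cmod (U z0))\<^sup>2) * U z0))"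
  unfolding T_op_def by (simp only: mult.assoc)

lemma h_cont:
  assumes "continuous_on {-d..d} epsL" "continuous_on {-d..d} U"
  shows "continuous_on {-d..d} (\<lambda>z0. complex_of_real (1 - epsL z0 - \<alpha> * (cmod (U z0))\<^sup>2) * U z0)"
  by (intro continuous_intros assms)

lemma exp_term_norm: "cmod (complex_of_real a * exp (- \<i> * complex_of_real x)) = \<bar>a\<bar>"
  by (simp add: norm_mult norm_exp_eq_Re)


lemma cubic_roots:
  fixes A c a :: real
  assumes A: "A > 0" and c: "c > 0" and a: "a > 0" and cond: "27 * A * a\<^sup>2 < 4 * c ^ 3"
  defines "P \<equiv> (\<lambda>p. A * p ^ 3 - c * p + a)"
  shows "\<exists>p1 p2. 0 < p1 \<and> p1 < p2 \<and> P p1 = 0 \<and> P p2 = 0 \<and>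
           (\<forall>p>0. P p = 0 \<longrightarrow> p = p1 \<or> p = p2) \<and> (\<forall>p. p1 < p \<and> p < p2 \<longrightarrow> P p < 0)"
proof -
  define ps where "ps = sqrt (c / (3 * A))"
  have ps0: "ps > 0" unfolding ps_def using A c by simp
  have ps2: "ps\<^sup>2 = c / (3 * A)" unfolding ps_def using A c by simp
  have Aps: "A * ps ^ 3 = c * ps / 3"
  proof -
    have "A * ps ^ 3 = A * ps\<^sup>2 * ps" by (simp add: power2_eq_square power3_eq_cube)
    then show ?thesis using ps2 A by (simp add: field_simps)
  qed
  have "a\<^sup>2 < (2 * c * ps / 3)\<^sup>2"
  proof -
    have "(2 * c * ps / 3)\<^sup>2 = 4 * c\<^sup>2 * ps\<^sup>2 / 9" by (simp add: power2_eq_square)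
    also have "\<dots> = 4 * c ^ 3 / (27 * A)" unfolding ps2 using A by (simp add: field_simps power2_eq_square power3_eq_cube)
    finally have e: "(2 * c * ps / 3)\<^sup>2 = 4 * c ^ 3 / (27 * A)" .
    have "a\<^sup>2 < 4 * c ^ 3 / (27 * A)" using cond A by (simp add: field_simps)
    then show ?thesis using e by simp
  qed
  then have "a < 2 * c * ps / 3"
    by (rule power_less_imp_less_base) (use ps0 c in simp)
  then have Pps: "P ps < 0" unfolding P_def using Aps by simp
  have P2: "P (2 * ps) > 0"
  proof -
    have "A * (2 * ps) ^ 3 = 8 * (A * ps ^ 3)" by (simp add: power3_eq_cube)
    then have "P (2 * ps) = 8 * (c * ps / 3) - 2 * c * ps + a" unfolding P_def Aps by simp
    moreover have "c * ps > 0" using c ps0 by simp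
    ultimately show ?thesis using a by simp
  qed
  have cont: "continuous_on S P" for S unfolding P_def by (intro continuous_intros)
  obtain p1 where p1: "0 \<le> p1" "p1 \<le> ps" "P p1 = 0"
  proof -
    have "P 0 = a" unfolding P_def by simp
    then show ?thesis using IVT2'[of P ps 0 0] cont Pps a ps0 that by force
  qed
  obtain p2 where p2: "ps \<le> p2" "p2 \<le> 2 * ps" "P p2 = 0"
    using IVT'[of P ps 0 "2*ps"] cont Pps P2 ps0 by force
  have "p1 \<noteq> 0" using p1 a unfolding P_def by auto
  have "p1 \<noteq> ps" "p2 \<noteq> ps" using p1 p2 Pps by auto
  have p1pos: "p1 > 0" "p1 < p2" using p1 p2 \<open>p1 \<noteq> 0\<close> \<open>p1 \<noteq> ps\<close> \<open>p2 \<noteq> ps\<close> by auto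
  have "(p1 - p2) * (A * (p1\<^sup>2 + p1 * p2 + p2\<^sup>2) - c) = P p1 - P p2"
    unfolding P_def by (simp add: algebra_simps power2_eq_square power3_eq_cube)
  then have key: "A * (p1\<^sup>2 + p1 * p2 + p2\<^sup>2) = c" using p1 p2 p1pos by simp
  have aeq: "a = c * p1 - A * p1 ^ 3" using p1(3) unfolding P_def by simp
  have fact: "P p = A * (p - p1) * (p - p2) * (p + p1 + p2)" for p
  proof -
    have "A * (p - p1) * (p - p2) * (p + p1 + p2) = A * p ^ 3 - A * (p1\<^sup>2 + p1 * p2 + p2\<^sup>2) * p + A * (p1\<^sup>2 * p2 + p1 * p2\<^sup>2)"
      by (simp add: algebra_simps power2_eq_square power3_eq_cube)
    also have "A * (p1\<^sup>2 * p2 + p1 * p2\<^sup>2) = c * p1 - A * p1 ^ 3"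
    proof -
      have "c * p1 = A * (p1\<^sup>2 + p1 * p2 + p2\<^sup>2) * p1" using key by simp
      then show ?thesis by (simp add: algebra_simps power2_eq_square power3_eq_cube)
    qed
    finally show ?thesis unfolding P_def key aeq by simp
  qed
  show ?thesis
  proof (intro exI conjI allI impI)
    show "0 < p1" "p1 < p2" "P p1 = 0" "P p2 = 0" using p1pos p1 p2 by auto
  next
    fix p :: real assume "p > 0" "P p = 0"
    then show "p = p1 \<or> p = p2" unfolding fact using A p1pos by auto
  next
    fix p :: real assume "p1 < p \<and> p < p2"
    then show "P p < 0" unfolding fact using A p1pos
      by (intro mult_neg_pos mult_pos_neg) auto
  qed
qed


theorem theorem1:
  fixes \<delta> \<kappa> a \<alpha> \<phi> E :: real and epsL :: "real \<Rightarrow> real"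
  defines "d \<equiv> 2 * pi * \<delta>"
  defines "\<Gamma> \<equiv> \<kappa> * cos \<phi>"
  defines "q0 \<equiv> 2 * pi * \<delta> * \<kappa> / cos \<phi>"
  defines "PK \<equiv> (\<lambda>p::real. \<alpha> * q0 * p ^ 3 - (1 - (E - 1) * q0) * p + a)"
  defines "\<alpha>0 \<equiv> 4 / 27 * (1 / a\<^sup>2) * (1 - (E - 1) * q0) ^ 3 / q0"
  defines "\<alpha>1 \<equiv> 1 / 3 * inverse (q0 * (1 - (E - 1) * q0))"
  assumes "\<delta> > 0" and "\<kappa> > 0" and "a > 0" and "\<alpha> > 0"
    and "- (pi / 2) < \<phi>" and "\<phi> < pi / 2"
    and "continuous_on {-d..d} epsL"
    and "\<forall>z\<in>{-d..d}. 1 < epsL z"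
    and "E = Sup (epsL ` {-d..d})"
    and "(E - 1) * q0 < 1"
    and "\<alpha> < \<alpha>0" and "\<alpha> < \<alpha>1"
  shows "\<exists>p1 p2. 0 < p1 \<and> p1 < p2 \<and> PK p1 = 0 \<and> PK p2 = 0 \<and>
           (\<forall>p>0. PK p = 0 \<longrightarrow> p = p1 \<or> p = p2) \<and>
           (\<forall>p. p1 < p \<and> p < p2 \<and> q0 * (E - 1 + 3 * \<alpha> * p\<^sup>2) < 1 \<longrightarrow>
              (\<forall>U\<in>closed_ball_C d p. T_op a \<Gamma> \<kappa> d epsL \<alpha> U \<in> closed_ball_C d p) \<and>
              (\<forall>U\<in>closed_ball_C d p. \<forall>V\<in>closed_ball_C d p.
                 supnorm d (\<lambda>z. T_op a \<Gamma> \<kappa> d epsL \<alpha> U z - T_op a \<Gamma> \<kappa> d epsL \<alpha> V z)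
                 \<le> q0 * (E - 1 + 3 * \<alpha> * p\<^sup>2) * supnorm d (\<lambda>z. U z - V z)))"
  proof -
  have cphi: "cos \<phi> > 0" using assms by (intro cos_gt_zero_pi) auto
  have d0: "d > 0" unfolding d_def using assms by simp
  have G0: "\<Gamma> > 0" unfolding \<Gamma>_def using assms cphi by simp
  have q00: "q0 > 0" unfolding q0_def using assms cphi by simp
  define c where "c = 1 - (E - 1) * q0"
  have c0: "c > 0" unfolding c_def using assms by simp
  have cond: "27 * (\<alpha> * q0) * a\<^sup>2 < 4 * c ^ 3"
  proof -
    have "\<alpha> < 4 * c ^ 3 / (27 * a\<^sup>2 * q0)" using \<open>\<alpha> < \<alpha>0\<close> unfolding \<alpha>0_def c_def by simp
    then show ?thesis using \<open>a > 0\<close> q00 by (simp add: field_simps)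
  qed
  have PKe: "PK = (\<lambda>p. (\<alpha> * q0) * p ^ 3 - c * p + a)" unfolding PK_def c_def by simp
  obtain p1 p2 where R: "0 < p1" "p1 < p2" "PK p1 = 0" "PK p2 = 0"
    "\<forall>p>0. PK p = 0 \<longrightarrow> p = p1 \<or> p = p2" "\<forall>p. p1 < p \<and> p < p2 \<longrightarrow> PK p < 0"
    using cubic_roots[OF _ c0 \<open>a > 0\<close> cond] \<open>\<alpha> > 0\<close> q00 unfolding PKe by auto
  have Ebd: "epsL z \<le> E" if "z \<in> {-d..d}" for z
  proof -
    have "compact (epsL ` {-d..d})" by (intro compact_continuous_image assms) simp
    then have "bdd_above (epsL ` {-d..d})" by (intro bounded_imp_bdd_above compact_imp_bounded)
    then show ?thesis unfolding \<open>E = Sup (epsL ` {-d..d})\<close> using that by (intro cSup_upper) auto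
  qed
  have e1: "1 \<le> epsL z" if "z \<in> {-d..d}" for z using \<open>\<forall>z\<in>{-d..d}. 1 < epsL z\<close> that by force
  define C where "C = \<kappa>\<^sup>2 / (2 * \<Gamma>)"
  have C0: "C > 0" unfolding C_def using G0 assms by simp
  have Cq: "C * (2 * d) = q0" unfolding C_def q0_def d_def \<Gamma>_def using cphi assms
    by (simp add: field_simps power2_eq_square)
  have nC: "cmod (\<i> * complex_of_real C) = C" using C0 by (simp add: norm_mult)
  define h where "h = (\<lambda>U z0. complex_of_real (1 - epsL z0 - \<alpha> * (cmod (U z0))\<^sup>2) * U z0)"
  define I where "I = (\<lambda>U z. integral {-d..d} (\<lambda>z0. exp (\<i> * complex_of_real (\<Gamma> * \<bar>z - z0\<bar>)) * h U z0))"
  have TE: "T_op a \<Gamma> \<kappa> d epsL \<alpha> U z = complex_of_real a * exp (- \<i> * complex_of_real (\<Gamma> * (z - d)))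
      - (\<i> * complex_of_real C) * I U z" for U z
    unfolding T_eq I_def h_def C_def by simp
  have ball: "U \<in> closed_ball_C d p \<longleftrightarrow> continuous_on {-d..d} U \<and> (\<forall>z\<in>{-d..d}. cmod (U z) \<le> p)" for U p
  proof
    assume "U \<in> closed_ball_C d p"
    then show "continuous_on {-d..d} U \<and> (\<forall>z\<in>{-d..d}. cmod (U z) \<le> p)"
      unfolding closed_ball_C_def using supnorm_ge order_trans by blast
  next
    assume "continuous_on {-d..d} U \<and> (\<forall>z\<in>{-d..d}. cmod (U z) \<le> p)"
    then show "U \<in> closed_ball_C d p" unfolding closed_ball_C_def using supnorm_le d0 by auto
  qed
  have hc: "continuous_on {-d..d} (h U)" if "continuous_on {-d..d} U" for U
    unfolding h_def by (rule h_cont[OF \<open>continuous_on {-d..d} epsL\<close> that])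
  show ?thesis
  proof (intro exI conjI allI impI ballI)
    show "0 < p1" "p1 < p2" "PK p1 = 0" "PK p2 = 0" "\<And>p. 0 < p \<Longrightarrow> PK p = 0 \<Longrightarrow> p = p1 \<or> p = p2"
      using R by auto
  next
    fix p U assume pp: "p1 < p \<and> p < p2 \<and> q0 * (E - 1 + 3 * \<alpha> * p\<^sup>2) < 1" and U: "U \<in> closed_ball_C d p"
    have PKp: "PK p < 0" using R pp by auto
    have Uc: "continuous_on {-d..d} U" and Ub: "\<And>z. z \<in> {-d..d} \<Longrightarrow> cmod (U z) \<le> p" using U ball by auto
    have hb: "cmod (h U z0) \<le> (E - 1 + \<alpha> * p\<^sup>2) * p" if "z0 \<in> {-d..d}" for z0
      unfolding h_def using f_bound[OF Ub[OF that] e1[OF that] Ebd[OF that]] \<open>\<alpha> > 0\<close> by simp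
    have "cmod (T_op a \<Gamma> \<kappa> d epsL \<alpha> U z) \<le> p" if "z \<in> {-d..d}" for z
    proof -
      have "cmod (T_op a \<Gamma> \<kappa> d epsL \<alpha> U z) \<le> a + C * cmod (I U z)"
        unfolding TE using norm_triangle_ineq4 exp_term_norm \<open>a > 0\<close> nC
        by (metis abs_of_pos norm_mult)
      also have "\<dots> \<le> a + C * (2 * d * ((E - 1 + \<alpha> * p\<^sup>2) * p))"
        unfolding I_def using int_bound[OF hc[OF Uc] _ hb] d0 C0 by (simp add: mult_left_mono)
      also have "\<dots> = a + q0 * (E - 1 + \<alpha> * p\<^sup>2) * p" using Cq by (simp add: mult.assoc[symmetric])
      also have "\<dots> \<le> p" using PKp unfolding PK_def by (simp add: algebra_simps power2_eq_square power3_eq_cube)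
      finally show ?thesis .
    qed
    moreover have "continuous_on {-d..d} (T_op a \<Gamma> \<kappa> d epsL \<alpha> U)"
      unfolding TE[abs_def] I_def by (intro continuous_intros int_cont hc Uc)
    ultimately show "T_op a \<Gamma> \<kappa> d epsL \<alpha> U \<in> closed_ball_C d p" using ball by auto
  next
    fix p U V assume pp: "p1 < p \<and> p < p2 \<and> q0 * (E - 1 + 3 * \<alpha> * p\<^sup>2) < 1"
      and U: "U \<in> closed_ball_C d p" and V: "V \<in> closed_ball_C d p"
    have Uc: "continuous_on {-d..d} U" and Ub: "\<And>z. z \<in> {-d..d} \<Longrightarrow> cmod (U z) \<le> p" using U ball by auto
    have Vc: "continuous_on {-d..d} V" and Vb: "\<And>z. z \<in> {-d..d} \<Longrightarrow> cmod (V z) \<le> p" using V ball by auto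
    define S where "S = supnorm d (\<lambda>z. U z - V z)"
    have hb: "cmod (h U z0 - h V z0) \<le> (E - 1 + 3 * \<alpha> * p\<^sup>2) * S" if "z0 \<in> {-d..d}" for z0
    proof -
      have "cmod (h U z0 - h V z0) \<le> (E - 1 + 3 * \<alpha> * p\<^sup>2) * cmod (U z0 - V z0)"
        unfolding h_def using f_lip[OF Ub[OF that] Vb[OF that] e1[OF that] Ebd[OF that]] \<open>\<alpha> > 0\<close> by simp
      also have "\<dots> \<le> (E - 1 + 3 * \<alpha> * p\<^sup>2) * S"
      proof (rule mult_left_mono)
        show "cmod (U z0 - V z0) \<le> S" unfolding S_def
          by (rule supnorm_ge[of _ "\<lambda>z. U z - V z"]) (intro continuous_intros Uc Vc, fact)
        show "0 \<le> E - 1 + 3 * \<alpha> * p\<^sup>2" using e1[OF that] Ebd[OF that] \<open>\<alpha> > 0\<close> by simp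
      qed
      finally show ?thesis .
    qed
    have dc: "continuous_on {-d..d} (\<lambda>z0. h U z0 - h V z0)" by (intro continuous_intros hc Uc Vc)
    have "cmod (T_op a \<Gamma> \<kappa> d epsL \<alpha> U z - T_op a \<Gamma> \<kappa> d epsL \<alpha> V z) \<le> q0 * (E - 1 + 3 * \<alpha> * p\<^sup>2) * S"
      if "z \<in> {-d..d}" for z
    proof -
      have ii: "(\<lambda>z0. exp (\<i> * complex_of_real (\<Gamma> * \<bar>z - z0\<bar>)) * h W z0) integrable_on {-d..d}"
        if "continuous_on {-d..d} W" for W
        by (intro integrable_continuous_interval continuous_intros hc that)
      have "I U z - I V z = integral {-d..d} (\<lambda>z0. exp (\<i> * complex_of_real (\<Gamma> * \<bar>z - z0\<bar>)) * (h U z0 - h V z0))"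
      proof -
        have "(\<lambda>z0. exp (\<i> * complex_of_real (\<Gamma> * \<bar>z - z0\<bar>)) * (h U z0 - h V z0)) =
          (\<lambda>z0. exp (\<i> * complex_of_real (\<Gamma> * \<bar>z - z0\<bar>)) * h U z0 - exp (\<i> * complex_of_real (\<Gamma> * \<bar>z - z0\<bar>)) * h V z0)"
          by (simp add: algebra_simps)
        then show ?thesis unfolding I_def using integral_diff[OF ii[OF Uc] ii[OF Vc]] by simp
      qed
      then have "T_op a \<Gamma> \<kappa> d epsL \<alpha> U z - T_op a \<Gamma> \<kappa> d epsL \<alpha> V z
          = - (\<i> * complex_of_real C) * integral {-d..d} (\<lambda>z0. exp (\<i> * complex_of_real (\<Gamma> * \<bar>z - z0\<bar>)) * (h U z0 - h V z0))"
        unfolding TE by (simp add: algebra_simps)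
      then have "cmod (T_op a \<Gamma> \<kappa> d epsL \<alpha> U z - T_op a \<Gamma> \<kappa> d epsL \<alpha> V z)
          = C * cmod (integral {-d..d} (\<lambda>z0. exp (\<i> * complex_of_real (\<Gamma> * \<bar>z - z0\<bar>)) * (h U z0 - h V z0)))"
        using nC by (simp add: norm_mult)
      also have "\<dots> \<le> C * (2 * d * ((E - 1 + 3 * \<alpha> * p\<^sup>2) * S))"
        using int_bound[OF dc _ hb] d0 C0 by (simp add: mult_left_mono)
      also have "\<dots> = q0 * (E - 1 + 3 * \<alpha> * p\<^sup>2) * S" using Cq by (simp add: mult.assoc[symmetric])
      finally show ?thesis .
    qed
    then show "supnorm d (\<lambda>z. T_op a \<Gamma> \<kappa> d epsL \<alpha> U z - T_op a \<Gamma> \<kappa> d epsL \<alpha> V z)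
                 \<le> q0 * (E - 1 + 3 * \<alpha> * p\<^sup>2) * supnorm d (\<lambda>z. U z - V z)"
      unfolding S_def[symmetric] using d0 by (intro supnorm_le) auto
  qed
qed

end
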